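(* Let $\nu,a,b\in\mathbb{R}$ with $-\nu<b<a$, and let $\Omega$ be an open subset of $\{(x,t):t>0\}$. (i) Suppose $u_2,u_3$ are differentiable functions on $\Omega$ with $-\nu<u_3<u_2<a$ satisfying $x=\lambda_2(a,u_2,u_3)\,t$ and $x=\lambda_3(a,u_2,u_3)\,t$ on $\Omega$. Then $u_1\equiv a$, $u_2$, $u_3$ satisfy the Whitham equations $\partial_t u_i+\lambda_i(u_1,u_2,u_3)\partial_x u_i=0$, $i=1,2,3$, on $\Omega$. (ii) Suppose $u_2$ is a differentiable function on $\Omega$ with $b<u_2<a$ satisfying $x=\lambda_2(a,u_2,b)\,t$ on $\Omega$. Then $u_1\equiv a$, $u_2$, $u_3\equiv b$ satisfy the same Whitham equations on $\Omega$.
   Context: For $-\nu<u_3<u_2<u_1$ define $$I(u_1,u_2,u_3)=\int_{u_3}^{u_2}\frac{\eta+\nu}{\sqrt{(\eta+\nu)(u_1-\eta)(u_2-\eta)(\eta-u_3)}}\,d\eta,$$ and for $i=1,2,3$ $$\lambda_i=u_1+u_2+u_3+2\nu-\frac{I}{\partial I/\partial u_i}.$$ *)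

theory Defs
  imports "HOL-Analysis.Analysis"
begin

text \<open>The integral I(u1,u2,u3) (depending on the parameter nu), taken as a
  Henstock--Kurzweil integral over [u3,u2] (the integrand is nonnegative and
  absolutely integrable, with integrable endpoint singularities).\<close>
definition WI :: "real \<Rightarrow> real \<Rightarrow> real \<Rightarrow> real \<Rightarrow> real" where
  "WI \<nu> u1 u2 u3 = integral {u3..u2}
     (\<lambda>\<eta>. (\<eta> + \<nu>) / sqrt ((\<eta> + \<nu>) * (u1 - \<eta>) * (u2 - \<eta>) * (\<eta> - u3)))"

definition dWI1 :: "real \<Rightarrow> real \<Rightarrow> real \<Rightarrow> real \<Rightarrow> real" where
  "dWI1 \<nu> u1 u2 u3 = deriv (\<lambda>s. WI \<nu> s u2 u3) u1"
definition dWI2 :: "real \<Rightarrow> real \<Rightarrow> real \<Rightarrow> real \<Rightarrow> real" where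
  "dWI2 \<nu> u1 u2 u3 = deriv (\<lambda>s. WI \<nu> u1 s u3) u2"
definition dWI3 :: "real \<Rightarrow> real \<Rightarrow> real \<Rightarrow> real \<Rightarrow> real" where
  "dWI3 \<nu> u1 u2 u3 = deriv (\<lambda>s. WI \<nu> u1 u2 s) u3"

definition lam1 :: "real \<Rightarrow> real \<Rightarrow> real \<Rightarrow> real \<Rightarrow> real" where
  "lam1 \<nu> u1 u2 u3 = u1 + u2 + u3 + 2 * \<nu> - WI \<nu> u1 u2 u3 / dWI1 \<nu> u1 u2 u3"
definition lam2 :: "real \<Rightarrow> real \<Rightarrow> real \<Rightarrow> real \<Rightarrow> real" where
  "lam2 \<nu> u1 u2 u3 = u1 + u2 + u3 + 2 * \<nu> - WI \<nu> u1 u2 u3 / dWI2 \<nu> u1 u2 u3"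
definition lam3 :: "real \<Rightarrow> real \<Rightarrow> real \<Rightarrow> real \<Rightarrow> real" where
  "lam3 \<nu> u1 u2 u3 = u1 + u2 + u3 + 2 * \<nu> - WI \<nu> u1 u2 u3 / dWI3 \<nu> u1 u2 u3"

definition pdx :: "(real \<times> real \<Rightarrow> real) \<Rightarrow> real \<times> real \<Rightarrow> real" where
  "pdx u p = deriv (\<lambda>y. u (y, snd p)) (fst p)"
definition pdt :: "(real \<times> real \<Rightarrow> real) \<Rightarrow> real \<times> real \<Rightarrow> real" where
  "pdt u p = deriv (\<lambda>s. u (fst p, s)) (snd p)"

definition whitham :: "real \<Rightarrow> (real \<times> real) set \<Rightarrow> (real \<times> real \<Rightarrow> real)
    \<Rightarrow> (real \<times> real \<Rightarrow> real) \<Rightarrow> (real \<times> real \<Rightarrow> real) \<Rightarrow> bool" where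
  "whitham \<nu> \<Omega> u1 u2 u3 \<longleftrightarrow> (\<forall>p\<in>\<Omega>.
     pdt u1 p + lam1 \<nu> (u1 p) (u2 p) (u3 p) * pdx u1 p = 0 \<and>
     pdt u2 p + lam2 \<nu> (u1 p) (u2 p) (u3 p) * pdx u2 p = 0 \<and>
     pdt u3 p + lam3 \<nu> (u1 p) (u2 p) (u3 p) * pdx u3 p = 0)"

end

theory Submission
  imports Defs
begin


lemma param2:
  fixes g gs gr :: "real \<Rightarrow> real \<Rightarrow> real \<Rightarrow> real" and A :: "real set"
  assumes A: "open A" "convex A"
    and ds: "\<And>s r \<theta>. s\<in>A \<Longrightarrow> r\<in>A \<Longrightarrow> ((\<lambda>s. g s r \<theta>) has_real_derivative gs s r \<theta>) (at s)"
    and dr: "\<And>s r \<theta>. s\<in>A \<Longrightarrow> r\<in>A \<Longrightarrow> ((\<lambda>r. g s r \<theta>) has_real_derivative gr s r \<theta>) (at r)"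
    and cg: "continuous_on ((A\<times>A)\<times>UNIV) (\<lambda>(x,\<theta>). g (fst x) (snd x) \<theta>)"
    and cgs: "continuous_on ((A\<times>A)\<times>UNIV) (\<lambda>(x,\<theta>). gs (fst x) (snd x) \<theta>)"
    and cgr: "continuous_on ((A\<times>A)\<times>UNIV) (\<lambda>(x,\<theta>). gr (fst x) (snd x) \<theta>)"
    and s0: "s0 \<in> A" and r0: "r0 \<in> A"
  shows "((\<lambda>x. integral {0..pi/2} (g (fst x) (snd x))) has_derivative
          (\<lambda>h. integral {0..pi/2} (gs s0 r0) * fst h + integral {0..pi/2} (gr s0 r0) * snd h)) (at (s0,r0))"
proof -
  have cb: "cbox 0 (pi/2) = {0..pi/2::real}" by (simp add: cbox_interval)
  have c1: "continuous_on (A \<times> cbox 0 (pi/2)) (\<lambda>(x, t). h x r t)"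
    if "r \<in> A" and ch: "continuous_on ((A\<times>A)\<times>UNIV) (\<lambda>(x,\<theta>). h (fst x) (snd x) \<theta>)" for r and h :: "real \<Rightarrow> real \<Rightarrow> real \<Rightarrow> real"
  proof -
    have "continuous_on (A \<times> cbox 0 (pi/2)) ((\<lambda>(x,\<theta>). h (fst x) (snd x) \<theta>) \<circ> (\<lambda>(x,t). ((x,r),t)))"
      apply (rule continuous_on_compose)
       apply (auto intro!: continuous_intros simp: split_beta)[1]
      apply (rule continuous_on_subset[OF ch]) using that by auto
    then show ?thesis by (simp add: o_def split_beta)
  qed
  have c2: "continuous_on (A \<times> cbox 0 (pi/2)) (\<lambda>(x, t). h s x t)"
    if "s \<in> A" and ch: "continuous_on ((A\<times>A)\<times>UNIV) (\<lambda>(x,\<theta>). h (fst x) (snd x) \<theta>)" for s and h :: "real \<Rightarrow> real \<Rightarrow> real \<Rightarrow> real"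
  proof -
    have "continuous_on (A \<times> cbox 0 (pi/2)) ((\<lambda>(x,\<theta>). h (fst x) (snd x) \<theta>) \<circ> (\<lambda>(x,t). ((s,x),t)))"
      apply (rule continuous_on_compose)
       apply (auto intro!: continuous_intros simp: split_beta)[1]
      apply (rule continuous_on_subset[OF ch]) using that by auto
    then show ?thesis by (simp add: o_def split_beta)
  qed
  have int1: "(\<lambda>t. h x r t) integrable_on cbox 0 (pi/2)"
    if "r \<in> A" "x \<in> A" and ch: "continuous_on ((A\<times>A)\<times>UNIV) (\<lambda>(x,\<theta>). h (fst x) (snd x) \<theta>)" for r x and h :: "real \<Rightarrow> real \<Rightarrow> real \<Rightarrow> real"
  proof -
    have "continuous_on ({x} \<times> cbox 0 (pi/2)) (\<lambda>(x, t). h x r t)"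
      by (rule continuous_on_subset[OF c1[OF that(1) ch]]) (use that in auto)
    then have "continuous_on (cbox 0 (pi/2)) ((\<lambda>(x, t). h x r t) \<circ> (\<lambda>t. (x,t)))"
      apply (intro continuous_on_compose) apply (auto intro!: continuous_intros)[1]
        by (erule continuous_on_subset) auto
    then have "continuous_on (cbox 0 (pi/2)) (\<lambda>t. h x r t)" by (simp add: o_def)
    then show ?thesis by (rule integrable_continuous)
  qed
  have Ks: "((\<lambda>s. integral (cbox 0 (pi/2)) (g s r)) has_field_derivative integral (cbox 0 (pi/2)) (gs s r)) (at s within A)"
    if rA: "r \<in> A" and sA: "s \<in> A" for r s
  proof (rule leibniz_rule_field_derivative[where U=A])
    fix x t assume "x\<in>A" "t\<in>cbox 0 (pi/2)"
    show "((\<lambda>x. g x r t) has_field_derivative gs x r t) (at x within A)"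
      using ds[OF \<open>x\<in>A\<close> rA] by (rule has_field_derivative_at_within)
  next
    fix x assume "x\<in>A" show "g x r integrable_on cbox 0 (pi/2)" by (rule int1[OF rA \<open>x\<in>A\<close> cg])
  next
    show "continuous_on (A \<times> cbox 0 (pi/2)) (\<lambda>(x,t). gs x r t)" by (rule c1[OF rA cgs])
  qed (use sA A in auto)
  have Kr: "((\<lambda>r. integral (cbox 0 (pi/2)) (g s r)) has_field_derivative integral (cbox 0 (pi/2)) (gr s r)) (at r within A)"
    if "r \<in> A" "s \<in> A" for r s
  proof -
    have i: "(\<lambda>t. g s x t) integrable_on cbox 0 (pi/2)" if "x \<in> A" for x
    proof -
      have "continuous_on ({x} \<times> cbox 0 (pi/2)) (\<lambda>(x, t). g s x t)"
        by (rule continuous_on_subset[OF c2[OF \<open>s\<in>A\<close> cg]]) (use that in auto)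
      then have "continuous_on (cbox 0 (pi/2)) ((\<lambda>(x, t). g s x t) \<circ> (\<lambda>t. (x,t)))"
        apply (intro continuous_on_compose) apply (auto intro!: continuous_intros)[1]
        by (erule continuous_on_subset) auto
      then have "continuous_on (cbox 0 (pi/2)) (\<lambda>t. g s x t)" by (simp add: o_def)
      then show ?thesis by (rule integrable_continuous)
    qed
    show ?thesis
    proof (rule leibniz_rule_field_derivative[where U=A])
      fix x t assume "x\<in>A" "t\<in>cbox 0 (pi/2)"
      show "((\<lambda>x. g s x t) has_field_derivative gr s x t) (at x within A)"
        using dr[OF \<open>s\<in>A\<close> \<open>x\<in>A\<close>] by (rule has_field_derivative_at_within)
    next
      fix x assume "x\<in>A" show "g s x integrable_on cbox 0 (pi/2)" using i[OF \<open>x\<in>A\<close>] by simp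
    next
      show "continuous_on (A \<times> cbox 0 (pi/2)) (\<lambda>(x,t). gr s x t)" by (rule c2[OF \<open>s\<in>A\<close> cgr])
    qed (use that A in auto)
  qed
  have cKr: "continuous_on (A\<times>A) (\<lambda>x. integral (cbox 0 (pi/2)) (gr (fst x) (snd x)))"
    by (rule integral_continuous_on_param) (rule continuous_on_subset[OF cgr], auto)
  have cKr': "continuous (at (s0, r0) within A \<times> A) (\<lambda>(x, y). blinfun_mult_right (integral (cbox 0 (pi/2)) (gr x y)))"
  proof -
    have "continuous_on (A\<times>A) (\<lambda>x. blinfun_mult_right (integral (cbox 0 (pi/2)) (gr (fst x) (snd x))))"
      by (rule bounded_linear.continuous_on[OF bounded_linear_blinfun_mult_right cKr])
    then show ?thesis using s0 r0
      unfolding continuous_on_eq_continuous_within split_beta' by auto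
  qed
  have main: "((\<lambda>(x, y). integral (cbox 0 (pi/2)) (g x y)) has_derivative
        (\<lambda>(tx, ty). integral (cbox 0 (pi/2)) (gs s0 r0) * tx + blinfun_mult_right (integral (cbox 0 (pi/2)) (gr s0 r0)) ty))
        (at (s0, r0) within A \<times> A)"
  proof (rule has_derivative_partialsI[where fx="\<lambda>h. integral (cbox 0 (pi/2)) (gs s0 r0) * h"])
    show "((\<lambda>x. integral (cbox 0 (pi/2)) (g x r0)) has_derivative (\<lambda>h. integral (cbox 0 (pi/2)) (gs s0 r0) * h)) (at s0 within A)"
      using Ks[OF r0 s0] by (simp add: has_field_derivative_def)
  next
    fix x y assume "x \<in> A" "y \<in> A"
    show "((\<lambda>y. integral (cbox 0 (pi/2)) (g x y)) has_derivative blinfun_apply (blinfun_mult_right (integral (cbox 0 (pi/2)) (gr x y)))) (at y within A)"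
      using Kr[OF \<open>y\<in>A\<close> \<open>x\<in>A\<close>] by (simp add: has_field_derivative_def)
  next
    show "continuous (at (s0, r0) within A \<times> A) (\<lambda>(x, y). blinfun_mult_right (integral (cbox 0 (pi/2)) (gr x y)))"
      by (rule cKr')
  qed (use r0 A in auto)
  have "at (s0, r0) within A \<times> A = at (s0,r0)"
    using A s0 r0 by (intro at_within_open) (auto intro: open_Times)
  then show ?thesis
    using main unfolding cb split_beta' by (simp add: mult.commute)
qed

definition FF :: "real \<Rightarrow> real \<Rightarrow> real \<Rightarrow> real" where
  "FF \<nu> a \<eta> = sqrt (\<eta> + \<nu>) / sqrt (a - \<eta>)"
definition F1 :: "real \<Rightarrow> real \<Rightarrow> real \<Rightarrow> real" where
  "F1 \<nu> a \<eta> = (a + \<nu>) / (2 * sqrt (\<eta> + \<nu>) * ((a - \<eta>) * sqrt (a - \<eta>)))"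
definition F2 :: "real \<Rightarrow> real \<Rightarrow> real \<Rightarrow> real" where
  "F2 \<nu> a \<eta> = (a + \<nu>) * (3 * (\<eta> + \<nu>) - (a - \<eta>)) /
     (4 * ((\<eta> + \<nu>) * sqrt (\<eta> + \<nu>)) * ((a - \<eta>)\<^sup>2 * sqrt (a - \<eta>)))"

lemma FF_deriv: assumes "-\<nu> < \<eta>" "\<eta> < a"
  shows "(FF \<nu> a has_real_derivative F1 \<nu> a \<eta>) (at \<eta>)"
proof -
  have p: "\<eta> + \<nu> > 0" and q: "a - \<eta> > 0" using assms by auto
  have d1: "((\<lambda>x. sqrt (x+\<nu>)) has_real_derivative (inverse (sqrt (\<eta>+\<nu>)) / 2)) (at \<eta>)"
    using p by (auto intro!: derivative_eq_intros)
  have d2: "((\<lambda>x. sqrt (a-x)) has_real_derivative (- inverse (sqrt (a-\<eta>)) / 2)) (at \<eta>)"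
    using q by (auto intro!: derivative_eq_intros)
  have "((\<lambda>x. sqrt (x+\<nu>) / sqrt (a-x)) has_real_derivative
     ((inverse (sqrt (\<eta>+\<nu>)) / 2) * sqrt (a-\<eta>) - sqrt (\<eta>+\<nu>) * (- inverse (sqrt (a-\<eta>)) / 2)) / (sqrt (a-\<eta>) * sqrt (a-\<eta>))) (at \<eta>)"
    by (rule DERIV_divide[OF d1 d2]) (use q in simp)
  moreover have "((inverse (sqrt (\<eta>+\<nu>)) / 2) * sqrt (a-\<eta>) - sqrt (\<eta>+\<nu>) * (- inverse (sqrt (a-\<eta>)) / 2)) / (sqrt (a-\<eta>) * sqrt (a-\<eta>)) = F1 \<nu> a \<eta>"
  proof -
    have sp: "sqrt (\<eta>+\<nu>) > 0" "sqrt (\<eta>+\<nu>) * sqrt (\<eta>+\<nu>) = \<eta>+\<nu>" using p by auto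
    have sq: "sqrt (a-\<eta>) > 0" "sqrt (a-\<eta>) * sqrt (a-\<eta>) = a-\<eta>" using q by auto
    show ?thesis unfolding F1_def using sp sq
      by (simp add: field_simps)
  qed
  ultimately show ?thesis unfolding FF_def[abs_def] by simp
qed

lemma F1_deriv: assumes "-\<nu> < \<eta>" "\<eta> < a"
  shows "(F1 \<nu> a has_real_derivative F2 \<nu> a \<eta>) (at \<eta>)"
proof -
  have p: "\<eta> + \<nu> > 0" and q: "a - \<eta> > 0" using assms by auto
  have d1: "((\<lambda>x. sqrt (x+\<nu>)) has_real_derivative (inverse (sqrt (\<eta>+\<nu>)) / 2)) (at \<eta>)"
    using p by (auto intro!: derivative_eq_intros)
  have d2: "((\<lambda>x. sqrt (a-x)) has_real_derivative (- inverse (sqrt (a-\<eta>)) / 2)) (at \<eta>)"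
    using q by (auto intro!: derivative_eq_intros)
  have d3: "((\<lambda>x. a - x) has_real_derivative -1) (at \<eta>)"
    by (auto intro!: derivative_eq_intros)
  have sp: "sqrt (\<eta>+\<nu>) > 0" "sqrt (\<eta>+\<nu>) * sqrt (\<eta>+\<nu>) = \<eta>+\<nu>" using p by auto
  have sq: "sqrt (a-\<eta>) > 0" "sqrt (a-\<eta>) * sqrt (a-\<eta>) = a-\<eta>" using q by auto
  have nz: "2 * (sqrt (\<eta>+\<nu>) * ((a-\<eta>) * sqrt (a-\<eta>))) \<noteq> 0" using sp sq q by simp
  note d6 = DERIV_divide[OF DERIV_const[of "a+\<nu>"] DERIV_cmult[OF DERIV_mult[OF d1 DERIV_mult[OF d3 d2]], of 2] nz]
  have key: "(0 * (2*(P*(q*Q))) - c * (2 * (inverse P/2 * (q*Q) + (-1*Q + - inverse Q/2 * q)*P))) / ((2*(P*(q*Q)))*(2*(P*(q*Q))))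
      = c * (3*p - q) / (4*(p*P)*(q\<^sup>2*Q))"
    if "P > 0" "Q > 0" "P*P = p" "Q*Q = q" "c = p + q" for P Q p q c :: real
  proof -
    have "(0 * (2*(P*(Q*Q*Q))) - (P*P+Q*Q) * (2 * (inverse P/2 * (Q*Q*Q) + (-1*Q + - inverse Q/2 * (Q*Q))*P))) / ((2*(P*(Q*Q*Q)))*(2*(P*(Q*Q*Q))))
      = (P*P+Q*Q) * (3*(P*P) - Q*Q) / (4*(P*P*P)*((Q*Q)\<^sup>2*Q))"
      using that(1,2) by (simp add: field_simps power2_eq_square)
    then show ?thesis using that by (simp add: mult.assoc)
  qed
  show ?thesis unfolding F1_def[abs_def] mult.assoc
    apply (rule DERIV_cong[OF d6])
    unfolding F2_def
    by (rule key) (use sp sq in auto)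
qed


lemma cont_FF: "continuous_on {-\<nu><..<a} (FF \<nu> a)"
  by (rule continuous_at_imp_continuous_on) (metis DERIV_isCont FF_deriv greaterThanLessThan_iff)
lemma cont_F1: "continuous_on {-\<nu><..<a} (F1 \<nu> a)"
  by (rule continuous_at_imp_continuous_on) (metis DERIV_isCont F1_deriv greaterThanLessThan_iff)
lemma cont_F2: "continuous_on {-\<nu><..<a} (F2 \<nu> a)"
  unfolding F2_def[abs_def] by (intro continuous_intros) auto

lemma eta_in:
  assumes "r \<in> {lo<..<hi}" "s \<in> {lo<..<hi}"
  shows "r + (s - r) * (sin t)\<^sup>2 \<in> {lo<..<hi::real}"
proof -
  define S where "S = (sin t)\<^sup>2"
  have S: "0 \<le> S" "S \<le> 1" unfolding S_def by (auto simp: abs_square_le_1)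
  have e: "r + (s - r) * S = (1 - S) * r + S * s" by (simp add: algebra_simps)
  define m where "m = min (r-lo) (s-lo)"
  define M where "M = min (hi-r) (hi-s)"
  have m: "m > 0" "m \<le> r - lo" "m \<le> s - lo" using assms unfolding m_def by auto
  have M: "M > 0" "M \<le> hi - r" "M \<le> hi - s" using assms unfolding M_def by auto
  have "(1-S)*m \<le> (1-S)*(r-lo)" "S*m \<le> S*(s-lo)" using S m by (auto intro: mult_left_mono)
  moreover have "(1-S)*M \<le> (1-S)*(hi-r)" "S*M \<le> S*(hi-s)" using S M by (auto intro: mult_left_mono)
  ultimately have "(1 - S) * r + S * s - lo \<ge> m" "hi - ((1 - S) * r + S * s) \<ge> M"
    by (simp_all add: algebra_simps)
  then show ?thesis using m M e unfolding S_def by auto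
qed

lemma cont_comp:
  fixes f w :: "real \<Rightarrow> real"
  assumes f: "continuous_on {lo<..<hi} f" and w: "continuous_on UNIV w"
  shows "continuous_on (({lo<..<hi}\<times>{lo<..<hi})\<times>UNIV) (\<lambda>(x,\<theta>). f (snd x + (fst x - snd x)*(sin \<theta>)\<^sup>2) * w \<theta>)"
proof -
  have "continuous_on (({lo<..<hi}\<times>{lo<..<hi})\<times>UNIV) (\<lambda>y. f (snd (fst y) + (fst (fst y) - snd (fst y))*(sin (snd y))\<^sup>2))"
    apply (rule continuous_on_compose2[OF f])
     apply (rule continuous_at_imp_continuous_on, intro ballI continuous_intros)
    apply (clarsimp simp: mem_Times_iff)
    subgoal for a b t using eta_in[of b lo hi a t] by simp
    done
  moreover have "continuous_on (({lo<..<hi}\<times>{lo<..<hi})\<times>UNIV) (\<lambda>y. w (snd y))"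
    by (rule continuous_on_compose2[OF w]) (auto intro: continuous_intros)
  ultimately show ?thesis unfolding split_beta' by (rule continuous_on_mult)
qed

lemma deriv_s:
  assumes f: "\<And>\<eta>. \<eta> \<in> {lo<..<hi} \<Longrightarrow> (f has_real_derivative f' \<eta>) (at \<eta>)"
    and "s \<in> {lo<..<hi}" "r \<in> {lo<..<hi::real}"
  shows "((\<lambda>s. f (r + (s - r)*(sin t)\<^sup>2) * w t) has_real_derivative f' (r + (s - r)*(sin t)\<^sup>2) * ((sin t)\<^sup>2 * w t)) (at s)"
proof -
  have "((\<lambda>s. r + (s - r)*(sin t)\<^sup>2) has_real_derivative (sin t)\<^sup>2) (at s)"
    by (auto intro!: derivative_eq_intros)
  from DERIV_chain2[OF f[OF eta_in[OF assms(3,2)]] this]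
  have "((\<lambda>s. f (r + (s - r)*(sin t)\<^sup>2)) has_real_derivative f' (r + (s - r)*(sin t)\<^sup>2) * (sin t)\<^sup>2) (at s)" .
  from DERIV_mult[OF this DERIV_const[of "w t"]] show ?thesis by (simp add: mult.assoc)
qed

lemma deriv_r:
  assumes f: "\<And>\<eta>. \<eta> \<in> {lo<..<hi} \<Longrightarrow> (f has_real_derivative f' \<eta>) (at \<eta>)"
    and "s \<in> {lo<..<hi}" "r \<in> {lo<..<hi::real}"
  shows "((\<lambda>r. f (r + (s - r)*(sin t)\<^sup>2) * w t) has_real_derivative f' (r + (s - r)*(sin t)\<^sup>2) * ((cos t)\<^sup>2 * w t)) (at r)"
proof -
  have "((\<lambda>r. r + (s - r)*(sin t)\<^sup>2) has_real_derivative (cos t)\<^sup>2) (at r)"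
    by (auto intro!: derivative_eq_intros simp: cos_squared_eq)
  from DERIV_chain2[OF f[OF eta_in[OF assms(3,2)]] this]
  have "((\<lambda>r. f (r + (s - r)*(sin t)\<^sup>2)) has_real_derivative f' (r + (s - r)*(sin t)\<^sup>2) * (cos t)\<^sup>2) (at r)" .
  from DERIV_mult[OF this DERIV_const[of "w t"]] show ?thesis by (simp add: mult.assoc)
qed

definition Jw :: "(real \<Rightarrow> real) \<Rightarrow> (real \<Rightarrow> real) \<Rightarrow> real \<Rightarrow> real \<Rightarrow> real" where
  "Jw f w s r = integral {0..pi/2} (\<lambda>\<theta>. f (r + (s - r)*(sin \<theta>)\<^sup>2) * w \<theta>)"

lemma Jw_frechet:
  assumes f: "\<And>\<eta>. \<eta> \<in> {lo<..<hi} \<Longrightarrow> (f has_real_derivative f' \<eta>) (at \<eta>)"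
    and cf: "continuous_on {lo<..<hi} f" and cf': "continuous_on {lo<..<hi} f'"
    and w: "continuous_on UNIV w"
    and s0: "s0 \<in> {lo<..<hi}" and r0: "r0 \<in> {lo<..<hi::real}"
  shows "((\<lambda>x. Jw f w (fst x) (snd x)) has_derivative
     (\<lambda>h. Jw f' (\<lambda>t. (sin t)\<^sup>2 * w t) s0 r0 * fst h + Jw f' (\<lambda>t. (cos t)\<^sup>2 * w t) s0 r0 * snd h)) (at (s0, r0))"
  unfolding Jw_def
  apply (rule param2[where A="{lo<..<hi}" and g="\<lambda>s r t. f (r + (s - r)*(sin t)\<^sup>2) * w t"
     and gs = "\<lambda>s r t. f' (r + (s - r)*(sin t)\<^sup>2) * ((sin t)\<^sup>2 * w t)"
     and gr = "\<lambda>s r t. f' (r + (s - r)*(sin t)\<^sup>2) * ((cos t)\<^sup>2 * w t)"])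
  subgoal by simp
  subgoal by (rule convex_real_interval)
  subgoal by (rule deriv_s[OF f])
  subgoal by (rule deriv_r[OF f])
  subgoal by (rule cont_comp[OF cf w])
  subgoal by (rule cont_comp[OF cf', of "\<lambda>t. (sin t)\<^sup>2 * w t"]) (intro continuous_intros w)
  subgoal by (rule cont_comp[OF cf', of "\<lambda>t. (cos t)\<^sup>2 * w t"]) (intro continuous_intros w)
  subgoal by (rule s0)
  subgoal by (rule r0)
  done

lemma WI_eq:
  assumes nr: "-\<nu> < r" and rs: "r < s" and sa: "s < a"
  shows "WI \<nu> a s r = Jw (FF \<nu> a) (\<lambda>_. 2) s r"
proof -
  define h where "h \<theta> = FF \<nu> a (r + (s-r)*(sin \<theta>)\<^sup>2) * 2" for \<theta>
  have rA: "r \<in> {-\<nu><..<a}" and sA: "s \<in> {-\<nu><..<a}" using assms by auto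
  have hc: "continuous_on UNIV h"
  proof -
    have "continuous_on UNIV (\<lambda>\<theta>. FF \<nu> a (r + (s-r)*(sin \<theta>)\<^sup>2))"
      apply (rule continuous_on_compose2[OF cont_FF])
       apply (rule continuous_at_imp_continuous_on, intro ballI continuous_intros)
      using eta_in[OF rA sA] by auto
    then show ?thesis unfolding h_def by (intro continuous_intros)
  qed
  define H where "H y = integral {0..y} h" for y
  have Hc: "continuous_on {0..pi/2} H" unfolding H_def
    by (rule indefinite_integral_continuous_1) (rule integrable_continuous_real[OF continuous_on_subset[OF hc]], simp)
  have Hd: "(H has_real_derivative h y) (at y)" if "0 < y" "y < pi/2" for y
  proof -
    have "(H has_vector_derivative h y) (at y within {0..pi/2})" unfolding H_def
      by (rule integral_has_vector_derivative) (use continuous_on_subset[OF hc] that in auto)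
    then show ?thesis using that by (simp add: at_within_Icc_at has_real_derivative_iff_has_vector_derivative)
  qed
  define q where "q \<eta> = (\<eta> - r)/(s - r)" for \<eta>
  define th where "th \<eta> = arcsin (sqrt (q \<eta>))" for \<eta>
  have q01: "0 \<le> q \<eta> \<and> q \<eta> \<le> 1" if "\<eta> \<in> {r..s}" for \<eta>
    using that rs unfolding q_def by (auto simp: field_simps)
  have thr: "th \<eta> \<in> {0..pi/2}" if "\<eta> \<in> {r..s}" for \<eta>
  proof -
    have "0 \<le> sqrt (q \<eta>)" "sqrt (q \<eta>) \<le> 1" using q01[OF that] by auto
    then have "-1 \<le> sqrt (q \<eta>)" by linarith
    then show ?thesis unfolding th_def
      using q01[OF that] arcsin_le_arcsin[of 0 "sqrt (q \<eta>)"] arcsin_le_arcsin[of "sqrt (q \<eta>)" 1] by auto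
  qed
  have hq: "-1 \<le> sqrt (q \<eta>) \<and> sqrt (q \<eta>) \<le> 1" if "\<eta> \<in> {r..s}" for \<eta>
  proof -
    have "0 \<le> sqrt (q \<eta>)" "sqrt (q \<eta>) \<le> 1" using q01[OF that] by auto
    then show ?thesis by linarith
  qed
  have thc: "continuous_on {r..s} th" unfolding th_def
    apply (intro continuous_intros)
    unfolding q_def[abs_def] apply (intro continuous_intros) using rs apply simp
    using hq unfolding q_def by simp
  have Phic: "continuous_on {r..s} (\<lambda>\<eta>. H (th \<eta>))"
    by (rule continuous_on_compose2[OF Hc thc]) (use thr in auto)
  define f where "f \<eta> = (\<eta> + \<nu>) / sqrt ((\<eta> + \<nu>) * (a - \<eta>) * (s - \<eta>) * (\<eta> - r))" for \<eta>
  have Phid: "((\<lambda>\<eta>. H (th \<eta>)) has_real_derivative f \<eta>) (at \<eta>)" if "r < \<eta>" "\<eta> < s" for \<eta>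
  proof -
    have q: "0 < q \<eta>" "q \<eta> < 1" using that unfolding q_def by (auto simp: field_simps)
    have sq: "0 < sqrt (q \<eta>)" "sqrt (q \<eta>) < 1" using q by auto
    have sq3: "-1 < sqrt (q \<eta>)" using sq(1) by linarith
    have dq: "(q has_real_derivative 1/(s-r)) (at \<eta>)" unfolding q_def[abs_def]
      using rs by (auto intro!: derivative_eq_intros)
    have dsq: "((\<lambda>x. sqrt (q x)) has_real_derivative inverse (sqrt (q \<eta>)) / 2 * (1/(s-r))) (at \<eta>)"
      by (rule DERIV_chain2[OF DERIV_real_sqrt[OF q(1)] dq])
    have dth: "(th has_real_derivative inverse (sqrt (1 - (sqrt (q \<eta>))\<^sup>2)) * (inverse (sqrt (q \<eta>)) / 2 * (1/(s-r)))) (at \<eta>)"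
      unfolding th_def[abs_def] by (rule DERIV_chain2[OF DERIV_arcsin[OF sq3 sq(2)] dsq])
    have thi: "0 < th \<eta>" "th \<eta> < pi/2" unfolding th_def
      using arcsin_less_arcsin[of 0 "sqrt (q \<eta>)"] arcsin_less_arcsin[of "sqrt (q \<eta>)" 1] sq by auto
    have d: "((\<lambda>\<eta>. H (th \<eta>)) has_real_derivative h (th \<eta>) * (inverse (sqrt (1 - (sqrt (q \<eta>))\<^sup>2)) * (inverse (sqrt (q \<eta>)) / 2 * (1/(s-r))))) (at \<eta>)"
      by (rule DERIV_chain2[OF Hd[OF thi] dth])
    have sinth: "(sin (th \<eta>))\<^sup>2 = q \<eta>" unfolding th_def using sin_arcsin[OF less_imp_le[OF sq3] less_imp_le[OF sq(2)]] q by simp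
    have eta: "r + (s - r) * q \<eta> = \<eta>" unfolding q_def using rs by simp
    have hth: "h (th \<eta>) = FF \<nu> a \<eta> * 2" unfolding h_def sinth eta ..
    have p: "\<eta> + \<nu> > 0" "a - \<eta> > 0" "s - \<eta> > 0" "\<eta> - r > 0" "s - r > 0" using that assms by auto
    have e1: "sqrt (q \<eta>) = sqrt (\<eta> - r) / sqrt (s - r)" unfolding q_def by (simp add: real_sqrt_divide)
    have e2: "1 - (sqrt (q \<eta>))\<^sup>2 = (s - \<eta>) / (s - r)" using q p unfolding q_def by (simp add: field_simps)
    have e3: "sqrt ((\<eta> + \<nu>) * (a - \<eta>) * (s - \<eta>) * (\<eta> - r)) = sqrt (\<eta> + \<nu>) * sqrt (a - \<eta>) * sqrt (s - \<eta>) * sqrt (\<eta> - r)"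
      by (simp add: real_sqrt_mult)
    have ss: "sqrt (\<eta> + \<nu>) * sqrt (\<eta> + \<nu>) = \<eta> + \<nu>" "sqrt (s - r) * sqrt (s - r) = s - r" using p by auto
    have pos: "sqrt (\<eta> + \<nu>) > 0" "sqrt (a - \<eta>) > 0" "sqrt (s - \<eta>) > 0" "sqrt (\<eta> - r) > 0" "sqrt (s - r) > 0"
      using p by auto
    have "h (th \<eta>) * (inverse (sqrt (1 - (sqrt (q \<eta>))\<^sup>2)) * (inverse (sqrt (q \<eta>)) / 2 * (1/(s-r)))) = f \<eta>"
    proof -
      have key: "A / B * 2 * (inverse (C / E) * (inverse (D / E) / 2 * (1 / d))) = p / (A * B * C * D)"
        if "A > 0" "B > 0" "C > 0" "D > 0" "E > 0" "p = A*A" "d = E*E" for A B C D E p d :: real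
        using that by (simp add: field_simps)
      have e4: "sqrt ((s - \<eta>) / (s - r)) = sqrt (s - \<eta>) / sqrt (s - r)" by (simp add: real_sqrt_divide)
      show ?thesis
        unfolding hth e2 unfolding e1 f_def e3 FF_def e4
        by (rule key) (use pos ss in auto)
    qed
    with d show ?thesis by simp
  qed
  have "(f has_integral (H (th s) - H (th r))) {r..s}"
    apply (rule fundamental_theorem_of_calculus_interior)
    using rs Phic Phid by (auto simp: has_real_derivative_iff_has_vector_derivative)
  moreover have "th s = pi/2" "th r = 0" unfolding th_def q_def using rs by auto
  ultimately have "(f has_integral H (pi/2)) {r..s}" by (simp add: H_def)
  then have "integral {r..s} f = H (pi/2)" by blast
  then show ?thesis unfolding WI_def Jw_def H_def h_def f_def[abs_def] by simp
qed


lemma eta_Icc: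
  assumes "r \<le> s" shows "r + (s - r) * (sin t)\<^sup>2 \<in> {r..s::real}"
proof -
  have "0 \<le> (sin t)\<^sup>2" "(sin t)\<^sup>2 \<le> 1" by (auto simp: abs_square_le_1)
  then have "(s - r) * (sin t)\<^sup>2 \<le> (s - r) * 1" "0 \<le> (s - r) * (sin t)\<^sup>2"
    using assms by (intro mult_left_mono, auto)
  then show ?thesis by auto
qed

lemma Jw_has_integral:
  fixes f w :: "real \<Rightarrow> real"
  assumes f: "continuous_on {lo<..<hi} f" and w: "continuous_on UNIV w"
    and r: "r \<in> {lo<..<hi}" and s: "s \<in> {lo<..<hi}"
  shows "((\<lambda>\<theta>. f (r + (s - r)*(sin \<theta>)\<^sup>2) * w \<theta>) has_integral Jw f w s r) {0..pi/2}"
proof -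
  have "continuous_on UNIV (\<lambda>\<theta>. f (r + (s - r)*(sin \<theta>)\<^sup>2))"
    apply (rule continuous_on_compose2[OF f])
     apply (rule continuous_at_imp_continuous_on, intro ballI continuous_intros)
    using eta_in[OF r s] by auto
  then have "continuous_on {0..pi/2} (\<lambda>\<theta>. f (r + (s - r)*(sin \<theta>)\<^sup>2) * w \<theta>)"
    by (intro continuous_intros continuous_on_subset[OF w]) (auto intro: continuous_on_subset)
  then show ?thesis unfolding Jw_def
    by (intro integrable_integral integrable_continuous_real)
qed

lemma int_sin2: "((\<lambda>t. (sin t)\<^sup>2 * 2) has_integral pi/2) {0..pi/2}"
proof -
  have "((\<lambda>t. (sin t)\<^sup>2 * 2) has_integral ((pi/2 - sin (pi/2) * cos (pi/2)) - (0 - sin 0 * cos 0))) {0..pi/2}"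
    apply (rule fundamental_theorem_of_calculus_interior[where f="\<lambda>t. t - sin t * cos t"])
      apply simp
     apply (intro continuous_intros)
    apply (simp add: has_real_derivative_iff_has_vector_derivative[symmetric])
    apply (auto intro!: derivative_eq_intros simp: power2_eq_square cos_squared_eq[unfolded power2_eq_square] algebra_simps)
    done
  then show ?thesis by simp
qed

lemma int_cos2: "((\<lambda>t. (cos t)\<^sup>2 * 2) has_integral pi/2) {0..pi/2}"
proof -
  have "((\<lambda>t. (cos t)\<^sup>2 * 2) has_integral ((pi/2 + sin (pi/2) * cos (pi/2)) - (0 + sin 0 * cos 0))) {0..pi/2}"
    apply (rule fundamental_theorem_of_calculus_interior[where f="\<lambda>t. t + sin t * cos t"])
      apply simp
     apply (intro continuous_intros)
    apply (simp add: has_real_derivative_iff_has_vector_derivative[symmetric])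
    apply (auto intro!: derivative_eq_intros simp: power2_eq_square sin_squared_eq[unfolded power2_eq_square] algebra_simps)
    done
  then show ?thesis by simp
qed

lemma Jw_pos:
  fixes f w :: "real \<Rightarrow> real"
  assumes f: "continuous_on {lo<..<hi} f" and fpos: "\<And>\<eta>. \<eta> \<in> {lo<..<hi} \<Longrightarrow> f \<eta> > 0"
    and w: "continuous_on UNIV w" and wpos: "\<And>t. w t \<ge> 0"
    and wint: "(w has_integral c) {0..pi/2}" and c: "c > 0"
    and r: "r \<in> {lo<..<hi}" and s: "s \<in> {lo<..<hi}" and rs: "r \<le> s"
  shows "Jw f w s r > 0"
proof -
  have sub: "{r..s} \<subseteq> {lo<..<hi}" using r s by auto
  obtain x where x: "x \<in> {r..s}" "\<And>y. y \<in> {r..s} \<Longrightarrow> f x \<le> f y"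
    using continuous_attains_inf[OF compact_Icc _ continuous_on_subset[OF f sub]] rs by auto
  define m where "m = f x"
  have m: "m > 0" unfolding m_def using fpos x(1) sub by auto
  have "((\<lambda>t. m * w t) has_integral m * c) {0..pi/2}" by (rule has_integral_mult_right[OF wint])
  moreover have "m * w t \<le> f (r + (s - r)*(sin t)\<^sup>2) * w t" for t
    using x(2)[OF eta_Icc[OF rs]] wpos unfolding m_def by (intro mult_right_mono) auto
  ultimately have "m * c \<le> Jw f w s r"
    by (intro has_integral_le[OF _ Jw_has_integral[OF f w r s]]) auto
  moreover have "m * c > 0" using m c by simp
  ultimately show ?thesis by linarith
qed


lemma EPD:
  assumes r: "r \<in> {-\<nu><..<a}" and s: "s \<in> {-\<nu><..<a}"
  shows "2 * (s - r) * Jw (F2 \<nu> a) (\<lambda>t. (cos t)\<^sup>2 * ((sin t)\<^sup>2 * 2)) s r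
       = Jw (F1 \<nu> a) (\<lambda>t. (sin t)\<^sup>2 * 2) s r - Jw (F1 \<nu> a) (\<lambda>t. (cos t)\<^sup>2 * 2) s r"
proof -
  define \<eta> where "\<eta> t = r + (s - r)*(sin t)\<^sup>2" for t
  have \<eta>A: "\<eta> t \<in> {-\<nu><..<a}" for t unfolding \<eta>_def by (rule eta_in[OF r s])
  define \<phi> where "\<phi> t = F1 \<nu> a (\<eta> t) * (sin t * cos t)" for t
  define \<phi>' where "\<phi>' t = F2 \<nu> a (\<eta> t) * ((s - r)*(2 * sin t * cos t)) * (sin t * cos t)
      + F1 \<nu> a (\<eta> t) * (cos t * cos t - sin t * sin t)" for t
  have d\<eta>: "(\<eta> has_real_derivative (s - r)*(2 * sin t * cos t)) (at t)" for t
    unfolding \<eta>_def[abs_def] by (auto intro!: derivative_eq_intros simp: power2_eq_square)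
  have d\<phi>: "(\<phi> has_real_derivative \<phi>' t) (at t)" for t
  proof -
    have a1: "((\<lambda>t. F1 \<nu> a (\<eta> t)) has_real_derivative F2 \<nu> a (\<eta> t) * ((s - r)*(2 * sin t * cos t))) (at t)"
      by (rule DERIV_chain2[OF F1_deriv d\<eta>]) (use \<eta>A[of t] in auto)
    have a2: "((\<lambda>t. sin t * cos t) has_real_derivative (cos t * cos t - sin t * sin t)) (at t)"
      by (auto intro!: derivative_eq_intros simp: algebra_simps)
    show ?thesis unfolding \<phi>_def[abs_def] \<phi>'_def
      using DERIV_mult[OF a1 a2] by (simp add: algebra_simps)
  qed
  have c\<eta>: "continuous_on UNIV (\<lambda>t. F1 \<nu> a (\<eta> t))"
    apply (rule continuous_on_compose2[OF cont_F1])
     apply (rule continuous_at_imp_continuous_on) unfolding \<eta>_def apply (intro ballI continuous_intros)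
    using \<eta>A unfolding \<eta>_def by auto
  have "(\<phi>' has_integral (\<phi> (pi/2) - \<phi> 0)) {0..pi/2}"
    apply (rule fundamental_theorem_of_calculus_interior)
      apply simp
     unfolding \<phi>_def apply (intro continuous_intros continuous_on_subset[OF c\<eta>]) apply simp
    using d\<phi> unfolding \<phi>_def[symmetric] by (simp add: has_real_derivative_iff_has_vector_derivative)
  then have I0: "(\<phi>' has_integral 0) {0..pi/2}" unfolding \<phi>_def by simp
  define J1 where "J1 = Jw (F2 \<nu> a) (\<lambda>t. (cos t)\<^sup>2 * ((sin t)\<^sup>2 * 2)) s r"
  define J2 where "J2 = Jw (F1 \<nu> a) (\<lambda>t. (cos t)\<^sup>2 * 2) s r"
  define J3 where "J3 = Jw (F1 \<nu> a) (\<lambda>t. (sin t)\<^sup>2 * 2) s r"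
  have h1: "((\<lambda>t. F2 \<nu> a (\<eta> t) * ((cos t)\<^sup>2 * ((sin t)\<^sup>2 * 2))) has_integral J1) {0..pi/2}"
    unfolding J1_def \<eta>_def by (rule Jw_has_integral[OF cont_F2 _ r s]) (intro continuous_intros)
  have h2: "((\<lambda>t. F1 \<nu> a (\<eta> t) * ((cos t)\<^sup>2 * 2)) has_integral J2) {0..pi/2}"
    unfolding J2_def \<eta>_def by (rule Jw_has_integral[OF cont_F1 _ r s]) (intro continuous_intros)
  have h3: "((\<lambda>t. F1 \<nu> a (\<eta> t) * ((sin t)\<^sup>2 * 2)) has_integral J3) {0..pi/2}"
    unfolding J3_def \<eta>_def by (rule Jw_has_integral[OF cont_F1 _ r s]) (intro continuous_intros)
  have "((\<lambda>t. (s - r) * (F2 \<nu> a (\<eta> t) * ((cos t)\<^sup>2 * ((sin t)\<^sup>2 * 2))) + (1/2) * (F1 \<nu> a (\<eta> t) * ((cos t)\<^sup>2 * 2))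
        - (1/2) * (F1 \<nu> a (\<eta> t) * ((sin t)\<^sup>2 * 2))) has_integral ((s - r) * J1 + (1/2) * J2 - (1/2) * J3)) {0..pi/2}"
    by (intro has_integral_diff has_integral_add has_integral_mult_right h1 h2 h3)
  moreover have "(\<lambda>t. (s - r) * (F2 \<nu> a (\<eta> t) * ((cos t)\<^sup>2 * ((sin t)\<^sup>2 * 2))) + (1/2) * (F1 \<nu> a (\<eta> t) * ((cos t)\<^sup>2 * 2))
        - (1/2) * (F1 \<nu> a (\<eta> t) * ((sin t)\<^sup>2 * 2))) = \<phi>'"
    unfolding \<phi>'_def by (rule ext) (simp add: power2_eq_square algebra_simps)
  ultimately have "((s - r) * J1 + (1/2) * J2 - (1/2) * J3) = 0"
    using I0 has_integral_unique by metis
  then show ?thesis unfolding J1_def[symmetric] J2_def[symmetric] J3_def[symmetric] by linarith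
qed


lemma JF:
  fixes w :: "real \<Rightarrow> real"
  assumes w: "continuous_on UNIV w" and s: "s \<in> {-\<nu><..<a}" and r: "r \<in> {-\<nu><..<a}"
  shows "((\<lambda>x. Jw (FF \<nu> a) w (fst x) (snd x)) has_derivative
     (\<lambda>h. Jw (F1 \<nu> a) (\<lambda>t. (sin t)\<^sup>2 * w t) s r * fst h + Jw (F1 \<nu> a) (\<lambda>t. (cos t)\<^sup>2 * w t) s r * snd h)) (at (s, r))"
  by (rule Jw_frechet[OF _ cont_FF cont_F1 w s r]) (auto intro: FF_deriv)

lemma J1F:
  fixes w :: "real \<Rightarrow> real"
  assumes w: "continuous_on UNIV w" and s: "s \<in> {-\<nu><..<a}" and r: "r \<in> {-\<nu><..<a}"
  shows "((\<lambda>x. Jw (F1 \<nu> a) w (fst x) (snd x)) has_derivative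
     (\<lambda>h. Jw (F2 \<nu> a) (\<lambda>t. (sin t)\<^sup>2 * w t) s r * fst h + Jw (F2 \<nu> a) (\<lambda>t. (cos t)\<^sup>2 * w t) s r * snd h)) (at (s, r))"
  by (rule Jw_frechet[OF _ cont_F1 cont_F2 w s r]) (auto intro: F1_deriv)

lemma dWI2_eq:
  assumes "-\<nu> < r" "r < s" "s < a"
  shows "dWI2 \<nu> a s r = Jw (F1 \<nu> a) (\<lambda>t. (sin t)\<^sup>2 * 2) s r"
proof -
  have sA: "s \<in> {-\<nu><..<a}" and rA: "r \<in> {-\<nu><..<a}" using assms by auto
  have p: "((\<lambda>s'. (s', r)) has_derivative (\<lambda>h. (h, 0))) (at s)"
    by (auto intro!: derivative_eq_intros)
  have "(((\<lambda>x. Jw (FF \<nu> a) (\<lambda>_. 2) (fst x) (snd x)) \<circ> (\<lambda>s'. (s', r))) has_derivative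
     ((\<lambda>h. Jw (F1 \<nu> a) (\<lambda>t. (sin t)\<^sup>2 * 2) s r * fst h + Jw (F1 \<nu> a) (\<lambda>t. (cos t)\<^sup>2 * 2) s r * snd h) \<circ> (\<lambda>h. (h, 0)))) (at s)"
    by (rule diff_chain_at[OF p]) (use JF[OF _ sA rA, of "\<lambda>_. 2"] in simp)
  moreover have "((\<lambda>x. Jw (FF \<nu> a) (\<lambda>_. 2) (fst x) (snd x)) \<circ> (\<lambda>s'. (s', r))) = (\<lambda>s'. Jw (FF \<nu> a) (\<lambda>_. 2) s' r)"
    by (simp add: o_def)
  moreover have "((\<lambda>h. Jw (F1 \<nu> a) (\<lambda>t. (sin t)\<^sup>2 * 2) s r * fst h + Jw (F1 \<nu> a) (\<lambda>t. (cos t)\<^sup>2 * 2) s r * snd h) \<circ> (\<lambda>h. (h, 0)))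
     = (*) (Jw (F1 \<nu> a) (\<lambda>t. (sin t)\<^sup>2 * 2) s r)"
    by (simp add: o_def fun_eq_iff)
  ultimately have "((\<lambda>s'. Jw (FF \<nu> a) (\<lambda>_. 2) s' r) has_field_derivative Jw (F1 \<nu> a) (\<lambda>t. (sin t)\<^sup>2 * 2) s r) (at s)"
    unfolding has_field_derivative_def by simp
  then have "((\<lambda>s'. WI \<nu> a s' r) has_field_derivative Jw (F1 \<nu> a) (\<lambda>t. (sin t)\<^sup>2 * 2) s r) (at s)"
    by (rule has_field_derivative_transform_within_open[where S="{r<..<a}"]) (use assms WI_eq in auto)
  then show ?thesis unfolding dWI2_def by (rule DERIV_imp_deriv)
qed

lemma dWI3_eq:
  assumes "-\<nu> < r" "r < s" "s < a"
  shows "dWI3 \<nu> a s r = Jw (F1 \<nu> a) (\<lambda>t. (cos t)\<^sup>2 * 2) s r"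
proof -
  have sA: "s \<in> {-\<nu><..<a}" and rA: "r \<in> {-\<nu><..<a}" using assms by auto
  have p: "((\<lambda>r'. (s, r')) has_derivative (\<lambda>h. (0, h))) (at r)"
    by (auto intro!: derivative_eq_intros)
  have "(((\<lambda>x. Jw (FF \<nu> a) (\<lambda>_. 2) (fst x) (snd x)) \<circ> (\<lambda>r'. (s, r'))) has_derivative
     ((\<lambda>h. Jw (F1 \<nu> a) (\<lambda>t. (sin t)\<^sup>2 * 2) s r * fst h + Jw (F1 \<nu> a) (\<lambda>t. (cos t)\<^sup>2 * 2) s r * snd h) \<circ> (\<lambda>h. (0, h)))) (at r)"
    by (rule diff_chain_at[OF p]) (use JF[OF _ sA rA, of "\<lambda>_. 2"] in simp)
  moreover have "((\<lambda>x. Jw (FF \<nu> a) (\<lambda>_. 2) (fst x) (snd x)) \<circ> (\<lambda>r'. (s, r'))) = (\<lambda>r'. Jw (FF \<nu> a) (\<lambda>_. 2) s r')"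
    by (simp add: o_def)
  moreover have "((\<lambda>h. Jw (F1 \<nu> a) (\<lambda>t. (sin t)\<^sup>2 * 2) s r * fst h + Jw (F1 \<nu> a) (\<lambda>t. (cos t)\<^sup>2 * 2) s r * snd h) \<circ> (\<lambda>h. (0, h)))
     = (*) (Jw (F1 \<nu> a) (\<lambda>t. (cos t)\<^sup>2 * 2) s r)"
    by (simp add: o_def fun_eq_iff)
  ultimately have "((\<lambda>r'. Jw (FF \<nu> a) (\<lambda>_. 2) s r') has_field_derivative Jw (F1 \<nu> a) (\<lambda>t. (cos t)\<^sup>2 * 2) s r) (at r)"
    unfolding has_field_derivative_def by simp
  then have "((\<lambda>r'. WI \<nu> a s r') has_field_derivative Jw (F1 \<nu> a) (\<lambda>t. (cos t)\<^sup>2 * 2) s r) (at r)"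
    by (rule has_field_derivative_transform_within_open[where S="{-\<nu><..<s}"]) (use assms WI_eq in auto)
  then show ?thesis unfolding dWI3_def by (rule DERIV_imp_deriv)
qed

lemma J_pos:
  assumes "-\<nu> < r" "r < s" "s < a"
  shows "Jw (FF \<nu> a) (\<lambda>_. 2) s r > 0" "Jw (F1 \<nu> a) (\<lambda>t. (sin t)\<^sup>2 * 2) s r > 0"
    "Jw (F1 \<nu> a) (\<lambda>t. (cos t)\<^sup>2 * 2) s r > 0"
proof -
  have sA: "s \<in> {-\<nu><..<a}" and rA: "r \<in> {-\<nu><..<a}" using assms by auto
  have c2: "((\<lambda>_. 2::real) has_integral 2 * (pi/2)) {0..pi/2}"
    using has_integral_const_real[of "2::real" 0 "pi/2"] by simp
  show "Jw (FF \<nu> a) (\<lambda>_. 2) s r > 0"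
    by (rule Jw_pos[OF cont_FF _ _ _ c2 _ rA sA]) (use assms in \<open>auto simp: FF_def\<close>)
  show "Jw (F1 \<nu> a) (\<lambda>t. (sin t)\<^sup>2 * 2) s r > 0"
    by (rule Jw_pos[OF cont_F1 _ _ _ int_sin2 _ rA sA]) (use assms in \<open>auto simp: F1_def intro!: continuous_intros\<close>)
  show "Jw (F1 \<nu> a) (\<lambda>t. (cos t)\<^sup>2 * 2) s r > 0"
    by (rule Jw_pos[OF cont_F1 _ _ _ int_cos2 _ rA sA]) (use assms in \<open>auto simp: F1_def intro!: continuous_intros\<close>)
qed


lemma open_U: "open {x::real\<times>real. -\<nu> < snd x \<and> snd x < fst x \<and> fst x < a}"
  by (intro open_Collect_conj open_Collect_less continuous_intros)

lemma lam2_at: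
  assumes "-\<nu> < r0" "r0 < s0" "s0 < a"
  shows "\<exists>\<alpha> \<beta>. ((\<lambda>x. lam2 \<nu> a (fst x) (snd x)) has_derivative (\<lambda>h. \<alpha> * fst h + \<beta> * snd h)) (at (s0, r0))
     \<and> (lam2 \<nu> a s0 r0 = lam3 \<nu> a s0 r0 \<longrightarrow> \<beta> = 0)"
proof -
  define J where "J = Jw (FF \<nu> a) (\<lambda>_. 2)"
  define Js where "Js = Jw (F1 \<nu> a) (\<lambda>t. (sin t)\<^sup>2 * 2)"
  define Jr where "Jr = Jw (F1 \<nu> a) (\<lambda>t. (cos t)\<^sup>2 * 2)"
  define Jss where "Jss = Jw (F2 \<nu> a) (\<lambda>t. (sin t)\<^sup>2 * ((sin t)\<^sup>2 * 2))"
  define Jsr where "Jsr = Jw (F2 \<nu> a) (\<lambda>t. (cos t)\<^sup>2 * ((sin t)\<^sup>2 * 2))"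
  have sA: "s0 \<in> {-\<nu><..<a}" and rA: "r0 \<in> {-\<nu><..<a}" using assms by auto
  have JF': "((\<lambda>x. J (fst x) (snd x)) has_derivative (\<lambda>h. Js s0 r0 * fst h + Jr s0 r0 * snd h)) (at (s0, r0))"
    unfolding J_def Js_def Jr_def using JF[OF _ sA rA, of "\<lambda>_. 2"] by simp
  have JsF': "((\<lambda>x. Js (fst x) (snd x)) has_derivative (\<lambda>h. Jss s0 r0 * fst h + Jsr s0 r0 * snd h)) (at (s0, r0))"
    unfolding Js_def Jss_def Jsr_def by (rule J1F[OF _ sA rA]) (intro continuous_intros)
  have pos: "J s0 r0 > 0" "Js s0 r0 > 0" "Jr s0 r0 > 0" unfolding J_def Js_def Jr_def using J_pos[OF assms] by auto
  have D1: "((\<lambda>x. a + fst x + snd x + 2 * \<nu>) has_derivative (\<lambda>h. fst h + snd h)) (at (s0, r0))"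
    by (auto intro!: derivative_eq_intros)
  have nz: "Js (fst (s0, r0)) (snd (s0, r0)) \<noteq> 0" using pos by simp
  note D = has_derivative_diff[OF D1 has_derivative_divide'[OF JF' JsF' nz]]
  define \<alpha> where "\<alpha> = 1 - (Js s0 r0 * Js s0 r0 - J s0 r0 * Jss s0 r0) / (Js s0 r0 * Js s0 r0)"
  define \<beta> where "\<beta> = 1 - (Jr s0 r0 * Js s0 r0 - J s0 r0 * Jsr s0 r0) / (Js s0 r0 * Js s0 r0)"
  have "((\<lambda>x. a + fst x + snd x + 2 * \<nu> - J (fst x) (snd x) / Js (fst x) (snd x)) has_derivative (\<lambda>h. \<alpha> * fst h + \<beta> * snd h)) (at (s0, r0))"
    apply (rule has_derivative_eq_rhs[OF D])
    apply (rule ext)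
    unfolding \<alpha>_def \<beta>_def using pos by (simp add: field_simps)
  then have Dl: "((\<lambda>x. lam2 \<nu> a (fst x) (snd x)) has_derivative (\<lambda>h. \<alpha> * fst h + \<beta> * snd h)) (at (s0, r0))"
    apply (rule has_derivative_transform_within_open[OF _ open_U[of \<nu> a]])
    using assms apply simp
    unfolding lam2_def J_def Js_def using WI_eq dWI2_eq by auto
  moreover have "\<beta> = 0" if eq: "lam2 \<nu> a s0 r0 = lam3 \<nu> a s0 r0"
  proof -
    have "J s0 r0 / Js s0 r0 = J s0 r0 / Jr s0 r0"
      using eq unfolding lam2_def lam3_def J_def Js_def Jr_def
      using WI_eq[OF assms] dWI2_eq[OF assms] dWI3_eq[OF assms] by simp
    then have e: "Js s0 r0 = Jr s0 r0" using pos by (simp add: field_simps)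
    have "2 * (s0 - r0) * Jsr s0 r0 = Js s0 r0 - Jr s0 r0"
      unfolding Jsr_def Js_def Jr_def by (rule EPD[OF rA sA])
    then have "Jsr s0 r0 = 0" using e assms by simp
    then show ?thesis unfolding \<beta>_def using e pos by simp
  qed
  ultimately show ?thesis by blast
qed

lemma lam3_at:
  assumes "-\<nu> < r0" "r0 < s0" "s0 < a"
  shows "\<exists>\<alpha> \<beta>. ((\<lambda>x. lam3 \<nu> a (fst x) (snd x)) has_derivative (\<lambda>h. \<alpha> * fst h + \<beta> * snd h)) (at (s0, r0))
     \<and> (lam2 \<nu> a s0 r0 = lam3 \<nu> a s0 r0 \<longrightarrow> \<alpha> = 0)"
proof -
  define J where "J = Jw (FF \<nu> a) (\<lambda>_. 2)"
  define Js where "Js = Jw (F1 \<nu> a) (\<lambda>t. (sin t)\<^sup>2 * 2)"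
  define Jr where "Jr = Jw (F1 \<nu> a) (\<lambda>t. (cos t)\<^sup>2 * 2)"
  define Jrs where "Jrs = Jw (F2 \<nu> a) (\<lambda>t. (sin t)\<^sup>2 * ((cos t)\<^sup>2 * 2))"
  define Jrr where "Jrr = Jw (F2 \<nu> a) (\<lambda>t. (cos t)\<^sup>2 * ((cos t)\<^sup>2 * 2))"
  define Jsr where "Jsr = Jw (F2 \<nu> a) (\<lambda>t. (cos t)\<^sup>2 * ((sin t)\<^sup>2 * 2))"
  have sA: "s0 \<in> {-\<nu><..<a}" and rA: "r0 \<in> {-\<nu><..<a}" using assms by auto
  have JF': "((\<lambda>x. J (fst x) (snd x)) has_derivative (\<lambda>h. Js s0 r0 * fst h + Jr s0 r0 * snd h)) (at (s0, r0))"
    unfolding J_def Js_def Jr_def using JF[OF _ sA rA, of "\<lambda>_. 2"] by simp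
  have JsF': "((\<lambda>x. Jr (fst x) (snd x)) has_derivative (\<lambda>h. Jrs s0 r0 * fst h + Jrr s0 r0 * snd h)) (at (s0, r0))"
    unfolding Jr_def Jrs_def Jrr_def by (rule J1F[OF _ sA rA]) (intro continuous_intros)
  have Jrs_eq: "Jrs = Jsr" unfolding Jrs_def Jsr_def by (simp add: mult_ac)
  have pos: "J s0 r0 > 0" "Js s0 r0 > 0" "Jr s0 r0 > 0" unfolding J_def Js_def Jr_def using J_pos[OF assms] by auto
  have D1: "((\<lambda>x. a + fst x + snd x + 2 * \<nu>) has_derivative (\<lambda>h. fst h + snd h)) (at (s0, r0))"
    by (auto intro!: derivative_eq_intros)
  have nz: "Jr (fst (s0, r0)) (snd (s0, r0)) \<noteq> 0" using pos by simp
  note D = has_derivative_diff[OF D1 has_derivative_divide'[OF JF' JsF' nz]]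
  define \<alpha> where "\<alpha> = 1 - (Js s0 r0 * Jr s0 r0 - J s0 r0 * Jrs s0 r0) / (Jr s0 r0 * Jr s0 r0)"
  define \<beta> where "\<beta> = 1 - (Jr s0 r0 * Jr s0 r0 - J s0 r0 * Jrr s0 r0) / (Jr s0 r0 * Jr s0 r0)"
  have "((\<lambda>x. a + fst x + snd x + 2 * \<nu> - J (fst x) (snd x) / Jr (fst x) (snd x)) has_derivative (\<lambda>h. \<alpha> * fst h + \<beta> * snd h)) (at (s0, r0))"
    apply (rule has_derivative_eq_rhs[OF D])
    apply (rule ext)
    unfolding \<alpha>_def \<beta>_def using pos by (simp add: field_simps)
  then have Dl: "((\<lambda>x. lam3 \<nu> a (fst x) (snd x)) has_derivative (\<lambda>h. \<alpha> * fst h + \<beta> * snd h)) (at (s0, r0))"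
    apply (rule has_derivative_transform_within_open[OF _ open_U[of \<nu> a]])
    using assms apply simp
    unfolding lam3_def J_def Jr_def using WI_eq dWI3_eq by auto
  moreover have "\<alpha> = 0" if eq: "lam2 \<nu> a s0 r0 = lam3 \<nu> a s0 r0"
  proof -
    have "J s0 r0 / Js s0 r0 = J s0 r0 / Jr s0 r0"
      using eq unfolding lam2_def lam3_def J_def Js_def Jr_def
      using WI_eq[OF assms] dWI2_eq[OF assms] dWI3_eq[OF assms] by simp
    then have e: "Js s0 r0 = Jr s0 r0" using pos by (simp add: field_simps)
    have "2 * (s0 - r0) * Jsr s0 r0 = Js s0 r0 - Jr s0 r0"
      unfolding Jsr_def Js_def Jr_def by (rule EPD[OF rA sA])
    then have "Jsr s0 r0 = 0" using e assms by simp
    then show ?thesis unfolding \<alpha>_def Jrs_eq using e pos by simp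
  qed
  ultimately show ?thesis by blast
qed


lemma pdx_eq:
  assumes "(u has_derivative D) (at p)"
  shows "pdx u p = D (1, 0)"
proof -
  have l: "linear D" using assms has_derivative_linear by blast
  have p: "((\<lambda>y. (y, snd p)) has_derivative (\<lambda>h. (h, 0))) (at (fst p))"
    by (auto intro!: derivative_eq_intros)
  have "((u \<circ> (\<lambda>y. (y, snd p))) has_derivative (D \<circ> (\<lambda>h. (h, 0)))) (at (fst p))"
    by (rule diff_chain_at[OF p]) (use assms in simp)
  moreover have "(D \<circ> (\<lambda>h. (h, 0))) = (*) (D (1, 0))"
  proof
    fix h :: real
    have "(h, 0::real) = h *\<^sub>R (1, 0)" by simp
    then show "(D \<circ> (\<lambda>h. (h, 0))) h = D (1, 0) * h"
      using linear_scale[OF l, of h "(1, 0)"] by simp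
  qed
  ultimately have "((\<lambda>y. u (y, snd p)) has_field_derivative D (1, 0)) (at (fst p))"
    unfolding has_field_derivative_def by (simp add: o_def)
  then show ?thesis unfolding pdx_def by (rule DERIV_imp_deriv)
qed

lemma pdt_eq:
  assumes "(u has_derivative D) (at p)"
  shows "pdt u p = D (0, 1)"
proof -
  have l: "linear D" using assms has_derivative_linear by blast
  have p: "((\<lambda>y. (fst p, y)) has_derivative (\<lambda>h. (0, h))) (at (snd p))"
    by (auto intro!: derivative_eq_intros)
  have "((u \<circ> (\<lambda>y. (fst p, y))) has_derivative (D \<circ> (\<lambda>h. (0, h)))) (at (snd p))"
    by (rule diff_chain_at[OF p]) (use assms in simp)
  moreover have "(D \<circ> (\<lambda>h. (0, h))) = (*) (D (0, 1))"
  proof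
    fix h :: real
    have "(0::real, h) = h *\<^sub>R (0, 1)" by simp
    then show "(D \<circ> (\<lambda>h. (0, h))) h = D (0, 1) * h"
      using linear_scale[OF l, of h "(0, 1)"] by simp
  qed
  ultimately have "((\<lambda>y. u (fst p, y)) has_field_derivative D (0, 1)) (at (snd p))"
    unfolding has_field_derivative_def by (simp add: o_def)
  then show ?thesis unfolding pdt_def by (rule DERIV_imp_deriv)
qed

lemma key_pde:
  fixes u g :: "real \<times> real \<Rightarrow> real"
  assumes \<Omega>: "open \<Omega>" "p \<in> \<Omega>"
    and du: "(u has_derivative D) (at p)"
    and dg: "(g has_derivative (\<lambda>h. \<alpha> * D h)) (at p)"
    and eq: "\<And>q. q \<in> \<Omega> \<Longrightarrow> fst q = g q * snd q"
  shows "pdt u p + g p * pdx u p = 0"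
proof -
  have "((\<lambda>q. g q * snd q) has_derivative (\<lambda>h. g p * snd h + \<alpha> * D h * snd p)) (at p)"
    using has_derivative_mult[OF dg has_derivative_snd[OF has_derivative_ident]] by simp
  then have "(fst has_derivative (\<lambda>h. g p * snd h + \<alpha> * D h * snd p)) (at p)"
    by (rule has_derivative_transform_within_open[OF _ \<Omega>]) (use eq in auto)
  moreover have "(fst has_derivative fst) (at p)" by (rule has_derivative_fst[OF has_derivative_ident])
  ultimately have E: "(\<lambda>h. g p * snd h + \<alpha> * D h * snd p) = fst" by (rule has_derivative_unique)
  have e1: "\<alpha> * D (1, 0) * snd p = 1" using fun_cong[OF E, of "(1, 0)"] by simp
  have e2: "g p + \<alpha> * D (0, 1) * snd p = 0" using fun_cong[OF E, of "(0, 1)"] by simp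
  have "\<alpha> * snd p * (D (0, 1) + g p * D (1, 0)) = 0"
    using e1 e2 by (simp add: algebra_simps)
  moreover have "\<alpha> * snd p \<noteq> 0" using e1 by auto
  ultimately have "D (0, 1) + g p * D (1, 0) = 0" by simp
  then show ?thesis using pdx_eq[OF du] pdt_eq[OF du] by simp
qed

lemma const_pd: "pdt (\<lambda>_. c) p = 0" "pdx (\<lambda>_. c) p = 0"
  unfolding pdt_def pdx_def by (simp_all add: DERIV_imp_deriv[OF DERIV_const])



theorem lemma4p2:
  fixes \<nu> a b :: real and \<Omega> :: "(real \<times> real) set"
  assumes "- \<nu> < b" and "b < a"
    and "open \<Omega>" and "\<Omega> \<subseteq> {p. snd p > 0}"
  shows
   "(\<forall>u2 u3 :: real \<times> real \<Rightarrow> real.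
       (\<forall>p\<in>\<Omega>. u2 differentiable (at p) \<and> u3 differentiable (at p)) \<and>
       (\<forall>p\<in>\<Omega>. - \<nu> < u3 p \<and> u3 p < u2 p \<and> u2 p < a) \<and>
       (\<forall>(x, t)\<in>\<Omega>. x = lam2 \<nu> a (u2 (x, t)) (u3 (x, t)) * t \<and>
                     x = lam3 \<nu> a (u2 (x, t)) (u3 (x, t)) * t)
       \<longrightarrow> whitham \<nu> \<Omega> (\<lambda>_. a) u2 u3) \<and>
    (\<forall>u2 :: real \<times> real \<Rightarrow> real.
       (\<forall>p\<in>\<Omega>. u2 differentiable (at p)) \<and>
       (\<forall>p\<in>\<Omega>. b < u2 p \<and> u2 p < a) \<and>
       (\<forall>(x, t)\<in>\<Omega>. x = lam2 \<nu> a (u2 (x, t)) b * t)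
       \<longrightarrow> whitham \<nu> \<Omega> (\<lambda>_. a) u2 (\<lambda>_. b))"
proof (intro conjI allI impI)
  fix u2 u3 :: "real \<times> real \<Rightarrow> real"
  assume H: "(\<forall>p\<in>\<Omega>. u2 differentiable (at p) \<and> u3 differentiable (at p)) \<and>
       (\<forall>p\<in>\<Omega>. - \<nu> < u3 p \<and> u3 p < u2 p \<and> u2 p < a) \<and>
       (\<forall>(x, t)\<in>\<Omega>. x = lam2 \<nu> a (u2 (x, t)) (u3 (x, t)) * t \<and>
                     x = lam3 \<nu> a (u2 (x, t)) (u3 (x, t)) * t)"
  have eqs: "fst q = lam2 \<nu> a (u2 q) (u3 q) * snd q \<and> fst q = lam3 \<nu> a (u2 q) (u3 q) * snd q" if "q \<in> \<Omega>" for q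
    using H that by (cases q) auto
  show "whitham \<nu> \<Omega> (\<lambda>_. a) u2 u3"
    unfolding whitham_def
  proof (intro ballI conjI)
    fix p assume p: "p \<in> \<Omega>"
    show "pdt (\<lambda>_. a) p + lam1 \<nu> ((\<lambda>_. a) p) (u2 p) (u3 p) * pdx (\<lambda>_. a) p = 0"
      by (simp add: const_pd)
    obtain D2 where D2: "(u2 has_derivative D2) (at p)" using H p unfolding differentiable_def by blast
    obtain D3 where D3: "(u3 has_derivative D3) (at p)" using H p unfolding differentiable_def by blast
    have r: "- \<nu> < u3 p" "u3 p < u2 p" "u2 p < a" using H p by auto
    have tp: "snd p > 0" using assms(4) p by auto
    have l23: "lam2 \<nu> a (u2 p) (u3 p) = lam3 \<nu> a (u2 p) (u3 p)"
      using eqs[OF p] tp by (metis mult_right_cancel less_irrefl)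
    have V: "((\<lambda>q. (u2 q, u3 q)) has_derivative (\<lambda>h. (D2 h, D3 h))) (at p)"
      by (rule has_derivative_Pair[OF D2 D3])
    obtain \<alpha> \<beta> where L2: "((\<lambda>x. lam2 \<nu> a (fst x) (snd x)) has_derivative (\<lambda>h. \<alpha> * fst h + \<beta> * snd h)) (at (u2 p, u3 p))"
      and b0: "\<beta> = 0" using lam2_at[OF r(1) r(2) r(3)] l23 by blast
    have "(((\<lambda>x. lam2 \<nu> a (fst x) (snd x)) \<circ> (\<lambda>q. (u2 q, u3 q))) has_derivative ((\<lambda>h. \<alpha> * fst h + \<beta> * snd h) \<circ> (\<lambda>h. (D2 h, D3 h)))) (at p)"
      by (rule diff_chain_at[OF V]) (use L2 in simp)
    then have G2: "((\<lambda>q. lam2 \<nu> a (u2 q) (u3 q)) has_derivative (\<lambda>h. \<alpha> * D2 h)) (at p)"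
      by (simp add: o_def b0)
    show "pdt u2 p + lam2 \<nu> ((\<lambda>_. a) p) (u2 p) (u3 p) * pdx u2 p = 0"
      using key_pde[OF assms(3) p D2 G2] eqs by simp
    obtain \<alpha>' \<beta>' where L3: "((\<lambda>x. lam3 \<nu> a (fst x) (snd x)) has_derivative (\<lambda>h. \<alpha>' * fst h + \<beta>' * snd h)) (at (u2 p, u3 p))"
      and a0: "\<alpha>' = 0" using lam3_at[OF r(1) r(2) r(3)] l23 by blast
    have "(((\<lambda>x. lam3 \<nu> a (fst x) (snd x)) \<circ> (\<lambda>q. (u2 q, u3 q))) has_derivative ((\<lambda>h. \<alpha>' * fst h + \<beta>' * snd h) \<circ> (\<lambda>h. (D2 h, D3 h)))) (at p)"
      by (rule diff_chain_at[OF V]) (use L3 in simp)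
    then have G3: "((\<lambda>q. lam3 \<nu> a (u2 q) (u3 q)) has_derivative (\<lambda>h. \<beta>' * D3 h)) (at p)"
      by (simp add: o_def a0)
    have e3: "\<And>q. q \<in> \<Omega> \<Longrightarrow> fst q = lam3 \<nu> a (u2 q) (u3 q) * snd q" using eqs by blast
    show "pdt u3 p + lam3 \<nu> ((\<lambda>_. a) p) (u2 p) (u3 p) * pdx u3 p = 0"
      using key_pde[OF assms(3) p D3 G3 e3] by simp
  qed
next
  fix u2 :: "real \<times> real \<Rightarrow> real"
  assume H: "(\<forall>p\<in>\<Omega>. u2 differentiable (at p)) \<and>
       (\<forall>p\<in>\<Omega>. b < u2 p \<and> u2 p < a) \<and>
       (\<forall>(x, t)\<in>\<Omega>. x = lam2 \<nu> a (u2 (x, t)) b * t)"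
  have eqs: "fst q = lam2 \<nu> a (u2 q) b * snd q" if "q \<in> \<Omega>" for q
    using H that by (cases q) auto
  show "whitham \<nu> \<Omega> (\<lambda>_. a) u2 (\<lambda>_. b)"
    unfolding whitham_def
  proof (intro ballI conjI)
    fix p assume p: "p \<in> \<Omega>"
    show "pdt (\<lambda>_. a) p + lam1 \<nu> ((\<lambda>_. a) p) (u2 p) ((\<lambda>_. b) p) * pdx (\<lambda>_. a) p = 0"
      by (simp add: const_pd)
    show "pdt (\<lambda>_. b) p + lam3 \<nu> ((\<lambda>_. a) p) (u2 p) ((\<lambda>_. b) p) * pdx (\<lambda>_. b) p = 0"
      by (simp add: const_pd)
    obtain D2 where D2: "(u2 has_derivative D2) (at p)" using H p unfolding differentiable_def by blast
    have r: "- \<nu> < b" "b < u2 p" "u2 p < a" using H p assms by auto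
    have V: "((\<lambda>q. (u2 q, b)) has_derivative (\<lambda>h. (D2 h, 0))) (at p)"
      by (rule has_derivative_Pair[OF D2 has_derivative_const])
    obtain \<alpha> \<beta> where L2: "((\<lambda>x. lam2 \<nu> a (fst x) (snd x)) has_derivative (\<lambda>h. \<alpha> * fst h + \<beta> * snd h)) (at (u2 p, b))"
      using lam2_at[OF r(1) r(2) r(3)] by blast
    have "(((\<lambda>x. lam2 \<nu> a (fst x) (snd x)) \<circ> (\<lambda>q. (u2 q, b))) has_derivative ((\<lambda>h. \<alpha> * fst h + \<beta> * snd h) \<circ> (\<lambda>h. (D2 h, 0)))) (at p)"
      by (rule diff_chain_at[OF V]) (use L2 in simp)
    then have G2: "((\<lambda>q. lam2 \<nu> a (u2 q) b) has_derivative (\<lambda>h. \<alpha> * D2 h)) (at p)"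
      by (simp add: o_def)
    show "pdt u2 p + lam2 \<nu> ((\<lambda>_. a) p) (u2 p) ((\<lambda>_. b) p) * pdx u2 p = 0"
      using key_pde[OF assms(3) p D2 G2] eqs by simp
  qed
qed


end
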